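(* Let $G$ be an abelian Hausdorff topological group and $A\subseteq G$ with $0\notin A$. The following conditions are equivalent: (i) the Kalton map $K_A:S_A\to\overline{G}$ is continuous and its continuous extension $\overline{K_A}:P_A\to\overline{G}$ is a topologically isomorphic embedding satisfying $\overline{K_A}(P_A)\subseteq G$; (ii) the set $A$ is both absolutely summable and topologically independent in $G$.
   Context: All groups are abelian; topological groups are Hausdorff; $\overline{H}$ denotes the (Raikov) completion of a topological group $H$. For $a\in G$, $\langle a\rangle$ is the cyclic subgroup generated by $a$ with the subspace topology. $P_A=\prod_{a\in A}\langle a\rangle$ has the Tychonoff product topology and $S_A=\bigoplus_{a\in A}\langle a\rangle\subseteq P_A$ the subspace topology. The Kalton map $K_A:S_A\to G$ is the unique homomorphism extending each inclusion $\langle a\rangle\to G$. When $K_A$ is continuous it extends uniquely to a continuous homomorphism $\overline{S_A}\to\overline G$; since $\overline{S_A}=\prod_{a\in A}\overline{\langle a\rangle}\supseteq P_A$, its restriction to $P_A$ is denoted $\overline{K_A}:P_A\to\overline G$. $A$ is absolutely summable if for every family $\{z_a:a\in A\}$ of integers there is $g\in G$ such that for every neighbourhood $U$ of $0$ there is a finite $F\subseteq A$ with $g-\sum_{a\in E}z_aa\in U$ for every finite $E\subseteq A$ containing $F$. $A$ is topologically independent if $0\notin A$ and for every neighbourhood $W$ of $0$ there is a neighbourhood $U$ of $0$ such that for every finite $F\subseteq A$ and all integers $\{z_a:a\in F\}$, $\sum_{a\in F}z_aa\in U$ implies $z_aa\in W$ for all $a\in F$. *)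

theory Defs
  imports "HOL-Analysis.Analysis"
begin

definition zsmul :: "int \<Rightarrow> 'a::ab_group_add \<Rightarrow> 'a" where
  "zsmul k a = (if 0 \<le> k then (\<Sum>_\<in>{..<nat k}. a) else - (\<Sum>_\<in>{..<nat (- k)}. a))"

definition cyc :: "'a::ab_group_add \<Rightarrow> 'a set" where
  "cyc a = range (\<lambda>k. zsmul k a)"

text \<open>P_A: the Tychonoff product of the cyclic subgroups (subspace topologies).
  Elements are the functions f with f a in cyc a for a in A and f a = undefined outside A.\<close>
definition PA_top :: "'a::{topological_ab_group_add,t2_space} set \<Rightarrow> ('a \<Rightarrow> 'a) topology" where
  "PA_top A = product_topology (\<lambda>a. subtopology euclidean (cyc a)) A"

definition SA :: "'a::{topological_ab_group_add,t2_space} set \<Rightarrow> ('a \<Rightarrow> 'a) set" where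
  "SA A = {f \<in> topspace (PA_top A). finite {a \<in> A. f a \<noteq> 0}}"

definition SA_top :: "'a::{topological_ab_group_add,t2_space} set \<Rightarrow> ('a \<Rightarrow> 'a) topology" where
  "SA_top A = subtopology (PA_top A) (SA A)"

definition kalton :: "'a::ab_group_add set \<Rightarrow> ('a \<Rightarrow> 'a) \<Rightarrow> 'a" where
  "kalton A f = (\<Sum>a\<in>{a \<in> A. f a \<noteq> 0}. f a)"

definition absolutely_summable :: "'a::{topological_ab_group_add,t2_space} set \<Rightarrow> bool" where
  "absolutely_summable A \<longleftrightarrow>
     (\<forall>z :: 'a \<Rightarrow> int. \<exists>g. \<forall>U. open U \<and> 0 \<in> U \<longrightarrow>
        (\<exists>F. finite F \<and> F \<subseteq> A \<and>
           (\<forall>E. finite E \<and> F \<subseteq> E \<and> E \<subseteq> A \<longrightarrow> g - (\<Sum>a\<in>E. zsmul (z a) a) \<in> U)))"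

definition top_independent :: "'a::{topological_ab_group_add,t2_space} set \<Rightarrow> bool" where
  "top_independent A \<longleftrightarrow> 0 \<notin> A \<and>
     (\<forall>W. open W \<and> 0 \<in> W \<longrightarrow> (\<exists>U. open U \<and> 0 \<in> U \<and>
        (\<forall>F (z :: 'a \<Rightarrow> int). finite F \<and> F \<subseteq> A \<and> (\<Sum>a\<in>F. zsmul (z a) a) \<in> U \<longrightarrow>
            (\<forall>a\<in>F. zsmul (z a) a \<in> W))))"

end

theory Submission
  imports Defs
begin


definition nsm :: "nat \<Rightarrow> 'a::ab_group_add \<Rightarrow> 'a" where
  "nsm n a = (\<Sum>_\<in>{..<n}. a)"

lemma nsm_add: "nsm (m + n) a = nsm m a + nsm n a"
  by (induction n) (auto simp: nsm_def algebra_simps)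

lemma nsm_0 [simp]: "nsm 0 a = 0" by (simp add: nsm_def)

lemma zsmul_nsm: "int p - int q = k \<Longrightarrow> zsmul k a = nsm p a - nsm q a"
proof -
  assume h: "int p - int q = k"
  have key: "nsm m1 a - nsm n1 a = nsm m2 a - nsm n2 a" if "m1 + n2 = m2 + n1" for m1 n1 m2 n2
  proof -
    have "nsm m1 a + nsm n2 a = nsm m2 a + nsm n1 a" using that by (metis nsm_add)
    thus ?thesis by (simp add: algebra_simps)
  qed
  show ?thesis
  proof (cases "0 \<le> k")
    case True
    have "zsmul k a = nsm (nat k) a - nsm 0 a" using True by (simp add: zsmul_def nsm_def)
    also have "\<dots> = nsm p a - nsm q a" by (rule key) (use h True in linarith)
    finally show ?thesis .
  next
    case False
    have "zsmul k a = nsm 0 a - nsm (nat (-k)) a" using False by (simp add: zsmul_def nsm_def)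
    also have "\<dots> = nsm p a - nsm q a" by (rule key) (use h False in linarith)
    finally show ?thesis .
  qed
qed

lemma zsmul_0 [simp]: "zsmul 0 a = 0" by (simp add: zsmul_def)

lemma zsmul_add: "zsmul k a + zsmul l a = zsmul (k + l) a"
proof -
  obtain p1 q1 p2 q2 where h: "int p1 - int q1 = k" "int p2 - int q2 = l"
    by (metis int_diff_cases)
  have "zsmul k a + zsmul l a = (nsm p1 a - nsm q1 a) + (nsm p2 a - nsm q2 a)"
    by (simp only: zsmul_nsm[OF h(1), of a] zsmul_nsm[OF h(2), of a])
  also have "\<dots> = nsm (p1+p2) a - nsm (q1+q2) a" by (simp add: nsm_add algebra_simps)
  also have "\<dots> = zsmul (k + l) a" by (rule zsmul_nsm[symmetric]) (use h in simp)
  finally show ?thesis .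
qed

lemma zsmul_diff: "zsmul k a - zsmul l a = zsmul (k - l) a"
proof -
  obtain p1 q1 p2 q2 where h: "int p1 - int q1 = k" "int p2 - int q2 = l"
    by (metis int_diff_cases)
  have "zsmul k a - zsmul l a = (nsm p1 a - nsm q1 a) - (nsm p2 a - nsm q2 a)"
    by (simp only: zsmul_nsm[OF h(1), of a] zsmul_nsm[OF h(2), of a])
  also have "\<dots> = nsm (p1+q2) a - nsm (q1+p2) a" by (simp add: nsm_add algebra_simps)
  also have "\<dots> = zsmul (k - l) a" by (rule zsmul_nsm[symmetric]) (use h in simp)
  finally show ?thesis .
qed

lemma cyc_0 [simp]: "0 \<in> cyc a"
  unfolding cyc_def by (metis rangeI zsmul_0)

lemma cyc_add: "x \<in> cyc a \<Longrightarrow> y \<in> cyc a \<Longrightarrow> x + y \<in> cyc a"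
proof -
  assume "x \<in> cyc a" "y \<in> cyc a"
  then obtain k l where "x = zsmul k a" "y = zsmul l a" unfolding cyc_def by blast
  thus ?thesis unfolding cyc_def using zsmul_add[of k a l] by auto
qed

lemma cyc_diff: "x \<in> cyc a \<Longrightarrow> y \<in> cyc a \<Longrightarrow> x - y \<in> cyc a"
proof -
  assume "x \<in> cyc a" "y \<in> cyc a"
  then obtain k l where "x = zsmul k a" "y = zsmul l a" unfolding cyc_def by blast
  thus ?thesis unfolding cyc_def using zsmul_diff[of k a l] by auto
qed

lemma cyc_zsmul [simp]: "zsmul k a \<in> cyc a"
  unfolding cyc_def by simp

lemma open_add_half:
  fixes W :: "'a::topological_ab_group_add set"
  assumes "open W" "0 \<in> W"
  shows "\<exists>V. open V \<and> 0 \<in> V \<and> (\<forall>x\<in>V. \<forall>y\<in>V. x + y \<in> W \<and> x - y \<in> W)"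
proof -
  have c1: "continuous_on UNIV (\<lambda>p::'a\<times>'a. fst p + snd p)" by (intro continuous_intros)
  have c2: "continuous_on UNIV (\<lambda>p::'a\<times>'a. fst p - snd p)" by (intro continuous_intros)
  have o: "open ((\<lambda>p::'a\<times>'a. fst p + snd p) -` W \<inter> (\<lambda>p::'a\<times>'a. fst p - snd p) -` W)"
    using open_vimage[OF assms(1) c1] open_vimage[OF assms(1) c2] by (rule open_Int)
  have m: "(0,0) \<in> (\<lambda>p::'a\<times>'a. fst p + snd p) -` W \<inter> (\<lambda>p::'a\<times>'a. fst p - snd p) -` W"
    using assms(2) by simp
  obtain B C where BC: "open B" "open C" "(0,0) \<in> B \<times> C"
    "B \<times> C \<subseteq> (\<lambda>p::'a\<times>'a. fst p + snd p) -` W \<inter> (\<lambda>p::'a\<times>'a. fst p - snd p) -` W"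
    by (rule open_prod_elim[OF o m])
  have "\<forall>x\<in>B \<inter> C. \<forall>y\<in>B \<inter> C. x + y \<in> W \<and> x - y \<in> W"
  proof (intro ballI)
    fix x y assume "x \<in> B \<inter> C" "y \<in> B \<inter> C"
    then have "(x, y) \<in> B \<times> C" by simp
    with BC(4) have "(x, y) \<in> (\<lambda>p::'a\<times>'a. fst p + snd p) -` W \<inter> (\<lambda>p::'a\<times>'a. fst p - snd p) -` W"
      by (rule subsetD)
    then show "x + y \<in> W \<and> x - y \<in> W" by simp
  qed
  moreover have "open (B \<inter> C)" using BC(1,2) by (rule open_Int)
  moreover have "0 \<in> B \<inter> C" using BC(3) by simp
  ultimately show ?thesis by blast
qed

lemma open_sum_small:
  fixes V :: "'a::topological_ab_group_add set"
  assumes "finite F" "open V" "0 \<in> V"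
  shows "\<exists>V'. open V' \<and> 0 \<in> V' \<and> (\<forall>x. (\<forall>a\<in>F. x a \<in> V') \<longrightarrow> sum x F \<in> V)"
  using assms(1,2,3)
proof (induction F arbitrary: V rule: finite_induct)
  case empty
  then show ?case by (intro exI[of _ UNIV]) auto
next
  case (insert b F)
  obtain V1 where V1: "open V1" "0 \<in> V1" "\<forall>x\<in>V1. \<forall>y\<in>V1. x + y \<in> V"
    using open_add_half[OF insert.prems] by blast
  obtain V2 where V2: "open V2" "0 \<in> V2" "\<forall>x. (\<forall>a\<in>F. x a \<in> V2) \<longrightarrow> sum x F \<in> V1"
    using insert.IH[OF V1(1,2)] by blast
  have hs: "sum x (insert b F) \<in> V" if "\<forall>a\<in>insert b F. x a \<in> V1 \<inter> V2" for x
  proof -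
    have "x b \<in> V1" using that by blast
    moreover have "sum x F \<in> V1" using V2(3) that by blast
    ultimately show ?thesis using V1(3) insert.hyps by simp
  qed
  show ?case
  proof (rule exI[of _ "V1 \<inter> V2"], intro conjI allI impI)
    show "open (V1 \<inter> V2)" using V1(1) V2(1) by (rule open_Int)
    show "0 \<in> V1 \<inter> V2" using V1(2) V2(2) by (rule IntI)
  qed (rule hs)
qed

lemma open_translate:
  fixes W :: "'a::topological_ab_group_add set"
  assumes "open W"
  shows "open {x. c + x \<in> W}" "open {x. x - c \<in> W}" "open {x. c - x \<in> W}"
proof -
  have "continuous_on UNIV (\<lambda>x::'a. c + x)" by (intro continuous_intros)
  from open_vimage[OF assms this] show "open {x. c + x \<in> W}" by (simp add: vimage_def)
  have "continuous_on UNIV (\<lambda>x::'a. x - c)" by (intro continuous_intros)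
  from open_vimage[OF assms this] show "open {x. x - c \<in> W}" by (simp add: vimage_def)
  have "continuous_on UNIV (\<lambda>x::'a. c - x)" by (intro continuous_intros)
  from open_vimage[OF assms this] show "open {x. c - x \<in> W}" by (simp add: vimage_def)
qed



lemma topP: "topspace (PA_top A) = (\<Pi>\<^sub>E a\<in>A. cyc a)"
  by (simp add: PA_top_def)

lemma P_rep:
  assumes "f \<in> (\<Pi>\<^sub>E a\<in>A. cyc a)"
  obtains z where "\<forall>a\<in>A. f a = zsmul (z a) a"
proof -
  have "\<forall>a\<in>A. \<exists>k. f a = zsmul k a" using assms unfolding cyc_def PiE_iff by blast
  then have "\<exists>z. \<forall>a\<in>A. f a = zsmul (z a) a" by (rule bchoice)
  then show ?thesis using that by blast
qed

lemma conv_iff: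
  fixes g :: "'a::topological_ab_group_add"
  shows "(f has_sum g) A \<longleftrightarrow> (\<forall>U. open U \<and> 0 \<in> U \<longrightarrow>
        (\<exists>F. finite F \<and> F \<subseteq> A \<and> (\<forall>E. finite E \<and> F \<subseteq> E \<and> E \<subseteq> A \<longrightarrow> g - sum f E \<in> U)))"
proof
  assume h: "(f has_sum g) A"
  then have t: "(sum f \<longlongrightarrow> g) (finite_subsets_at_top A)" by (simp add: has_sum_def)
  show "\<forall>U. open U \<and> 0 \<in> U \<longrightarrow>
        (\<exists>F. finite F \<and> F \<subseteq> A \<and> (\<forall>E. finite E \<and> F \<subseteq> E \<and> E \<subseteq> A \<longrightarrow> g - sum f E \<in> U))"
  proof (intro allI impI)
    fix U :: "'a set" assume U: "open U \<and> 0 \<in> U"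
    have o: "open {x. g - x \<in> U}" using U open_translate(3) by blast
    have m: "g \<in> {x. g - x \<in> U}" using U by simp
    have "eventually (\<lambda>E. sum f E \<in> {x. g - x \<in> U}) (finite_subsets_at_top A)"
      using topological_tendstoD[OF t o m] .
    then show "\<exists>F. finite F \<and> F \<subseteq> A \<and> (\<forall>E. finite E \<and> F \<subseteq> E \<and> E \<subseteq> A \<longrightarrow> g - sum f E \<in> U)"
      unfolding eventually_finite_subsets_at_top by simp
  qed
next
  assume h: "\<forall>U. open U \<and> 0 \<in> U \<longrightarrow>
        (\<exists>F. finite F \<and> F \<subseteq> A \<and> (\<forall>E. finite E \<and> F \<subseteq> E \<and> E \<subseteq> A \<longrightarrow> g - sum f E \<in> U))"
  have "(sum f \<longlongrightarrow> g) (finite_subsets_at_top A)"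
  proof (rule topological_tendstoI)
    fix S :: "'a set" assume S: "open S" "g \<in> S"
    have "open {x. g - x \<in> S}" using S open_translate(3) by blast
    moreover have "0 \<in> {x. g - x \<in> S}" using S by simp
    ultimately have "\<exists>F. finite F \<and> F \<subseteq> A \<and>
        (\<forall>E. finite E \<and> F \<subseteq> E \<and> E \<subseteq> A \<longrightarrow> g - sum f E \<in> {x. g - x \<in> S})"
      using h by (simp only: simp_thms)
    then obtain F where F: "finite F" "F \<subseteq> A"
      "\<forall>E. finite E \<and> F \<subseteq> E \<and> E \<subseteq> A \<longrightarrow> g - sum f E \<in> {x. g - x \<in> S}"
      by blast
    show "eventually (\<lambda>E. sum f E \<in> S) (finite_subsets_at_top A)"
      unfolding eventually_finite_subsets_at_top
    proof (intro exI conjI allI impI)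
      fix E assume "finite E \<and> F \<subseteq> E \<and> E \<subseteq> A"
      then have "g - (g - sum f E) \<in> S" using F(3) by simp
      then show "sum f E \<in> S" by simp
    qed (use F in auto)
  qed
  then show "(f has_sum g) A" by (simp add: has_sum_def)
qed

lemma AS_iff: "absolutely_summable A \<longleftrightarrow> (\<forall>z. (\<lambda>a. zsmul (z a) a) summable_on A)"
  unfolding absolutely_summable_def summable_on_def conv_iff by blast

lemma L_sum:
  assumes "absolutely_summable A" "f \<in> (\<Pi>\<^sub>E a\<in>A. cyc a)"
  shows "(f has_sum infsum f A) A"
proof -
  obtain z where z: "\<forall>a\<in>A. f a = zsmul (z a) a" using P_rep[OF assms(2)] by blast
  have "(\<lambda>a. zsmul (z a) a) summable_on A" using assms(1) AS_iff by blast
  then obtain s where "((\<lambda>a. zsmul (z a) a) has_sum s) A" unfolding summable_on_def by blast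
  then have hs: "(f has_sum s) A" using has_sum_cong[of A f "\<lambda>a. zsmul (z a) a" s] z by simp
  then have "infsum f A = s" by (rule infsumI)
  then show ?thesis using hs by simp
qed

lemma L_add:
  fixes A :: "'a::{topological_ab_group_add,t2_space} set"
  assumes "absolutely_summable A" "f \<in> (\<Pi>\<^sub>E a\<in>A. cyc a)" "g \<in> (\<Pi>\<^sub>E a\<in>A. cyc a)"
  shows "infsum (\<lambda>a\<in>A. f a + g a) A = infsum f A + infsum g A"
proof -
  have "((\<lambda>a. f a + g a) has_sum (infsum f A + infsum g A)) A"
    using has_sum_add[OF L_sum[OF assms(1,2)] L_sum[OF assms(1,3)]] .
  then have "((\<lambda>a\<in>A. f a + g a) has_sum (infsum f A + infsum g A)) A"
    using has_sum_cong[of A "\<lambda>a\<in>A. f a + g a" "\<lambda>a. f a + g a"] by simp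
  then show ?thesis by (rule infsumI)
qed

lemma L_diff:
  fixes A :: "'a::{topological_ab_group_add,t2_space} set"
  assumes "absolutely_summable A" "f \<in> (\<Pi>\<^sub>E a\<in>A. cyc a)" "g \<in> (\<Pi>\<^sub>E a\<in>A. cyc a)"
  shows "infsum (\<lambda>a\<in>A. f a - g a) A = infsum f A - infsum g A"
proof -
  have "(g has_sum (- (- infsum g A))) A" using L_sum[OF assms(1,3)] by simp
  then have "((\<lambda>a. - g a) has_sum (- infsum g A)) A" using has_sum_uminus by blast
  then have "((\<lambda>a. f a + - g a) has_sum (infsum f A + - infsum g A)) A"
    using has_sum_add[OF L_sum[OF assms(1,2)]] by blast
  then have "((\<lambda>a\<in>A. f a - g a) has_sum (infsum f A - infsum g A)) A"
    using has_sum_cong[of A "\<lambda>a\<in>A. f a - g a" "\<lambda>a. f a + - g a"] by simp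
  then show ?thesis by (rule infsumI)
qed

lemma L_SA:
  fixes A :: "'a::{topological_ab_group_add,t2_space} set"
  assumes "f \<in> SA A"
  shows "infsum f A = kalton A f"
proof -
  have fin: "finite {a \<in> A. f a \<noteq> 0}" using assms unfolding SA_def by blast
  have "infsum f A = infsum f {a \<in> A. f a \<noteq> 0}"
    by (rule infsum_cong_neutral) auto
  also have "\<dots> = kalton A f" using fin by (simp add: kalton_def)
  finally show ?thesis .
qed

lemma L_fin:
  fixes A :: "'a::{topological_ab_group_add,t2_space} set"
  assumes "finite F" "F \<subseteq> A"
  shows "infsum (\<lambda>a\<in>A. if a \<in> F then h a else 0) A = sum h F"
proof -
  have "infsum (\<lambda>a\<in>A. if a \<in> F then h a else 0) A = infsum h F"
    by (rule infsum_cong_neutral) (use assms(2) in auto)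
  also have "\<dots> = sum h F" using assms(1) by simp
  finally show ?thesis .
qed

lemma KAL_SA:
  fixes A :: "'a::{topological_ab_group_add,t2_space} set"
  assumes "finite E" "E \<subseteq> A"
  shows "(\<lambda>a\<in>A. if a \<in> E then zsmul (z a) a else 0) \<in> SA A"
proof -
  have "{a \<in> A. (\<lambda>a\<in>A. if a \<in> E then zsmul (z a) a else 0) a \<noteq> 0} \<subseteq> E" by auto
  then have "finite {a \<in> A. (\<lambda>a\<in>A. if a \<in> E then zsmul (z a) a else 0) a \<noteq> 0}"
    using assms(1) finite_subset by blast
  moreover have "(\<lambda>a\<in>A. if a \<in> E then zsmul (z a) a else 0) \<in> topspace (PA_top A)"
    unfolding topP by (auto simp: PiE_iff)
  ultimately show ?thesis unfolding SA_def by blast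
qed

lemma KAL_val:
  fixes A :: "'a::{topological_ab_group_add,t2_space} set"
  assumes "finite E" "E \<subseteq> A"
  shows "kalton A (\<lambda>a\<in>A. if a \<in> E then zsmul (z a) a else 0) = (\<Sum>a\<in>E. zsmul (z a) a)"
proof -
  have "kalton A (\<lambda>a\<in>A. if a \<in> E then zsmul (z a) a else 0)
      = infsum (\<lambda>a\<in>A. if a \<in> E then zsmul (z a) a else 0) A"
    using L_SA[OF KAL_SA[OF assms]] by simp
  also have "\<dots> = (\<Sum>a\<in>E. zsmul (z a) a)" by (rule L_fin[OF assms])
  finally show ?thesis .
qed

lemma OP:
  assumes "finite F" "\<forall>a\<in>F. openin X {x \<in> topspace X. Q a x}"
  shows "openin X {x \<in> topspace X. \<forall>a\<in>F. Q a x}"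
  using assms
proof (induction F rule: finite_induct)
  case empty
  then show ?case by simp
next
  case (insert b F)
  have "{x \<in> topspace X. \<forall>a\<in>insert b F. Q a x}
      = {x \<in> topspace X. Q b x} \<inter> {x \<in> topspace X. \<forall>a\<in>F. Q a x}" by auto
  moreover have "openin X {x \<in> topspace X. Q b x}" using insert.prems by simp
  moreover have "openin X {x \<in> topspace X. \<forall>a\<in>F. Q a x}" using insert.prems insert.IH by simp
  ultimately show ?case by (simp only: openin_Int)
qed

lemma proj_open:
  fixes A :: "'a::{topological_ab_group_add,t2_space} set"
  assumes "a \<in> A" "open T"
  shows "openin (PA_top A) {g \<in> topspace (PA_top A). g a \<in> T}"
proof -
  have "continuous_map (PA_top A) (subtopology euclidean (cyc a)) (\<lambda>g. g a)"
    unfolding PA_top_def using assms(1) by (rule continuous_map_product_projection)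
  then have c: "continuous_map (PA_top A) euclidean (\<lambda>g. g a)"
    by (simp add: continuous_map_in_subtopology)
  have "openin euclidean T" using assms(2) by simp
  then show ?thesis by (rule openin_continuous_map_preimage[OF c])
qed



lemma L_IND:
  fixes A :: "'a::{topological_ab_group_add,t2_space} set"
  assumes AS: "absolutely_summable A" and f: "f \<in> (\<Pi>\<^sub>E a\<in>A. cyc a)"
    and U: "open U"
    and TIU: "\<forall>F (z :: 'a \<Rightarrow> int). finite F \<and> F \<subseteq> A \<and> (\<Sum>a\<in>F. zsmul (z a) a) \<in> U \<longrightarrow>
            (\<forall>a\<in>F. zsmul (z a) a \<in> W)"
    and inU: "infsum f A \<in> U" and a: "a \<in> A"
  shows "f a \<in> W"
proof -
  obtain z where z: "\<forall>a\<in>A. f a = zsmul (z a) a" using P_rep[OF f] by blast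
  have t: "(sum f \<longlongrightarrow> infsum f A) (finite_subsets_at_top A)"
    using L_sum[OF AS f] by (simp add: has_sum_def)
  have "eventually (\<lambda>E. sum f E \<in> U) (finite_subsets_at_top A)"
    using topological_tendstoD[OF t U inU] .
  then obtain X where X: "finite X" "X \<subseteq> A" "\<forall>Y. finite Y \<and> X \<subseteq> Y \<and> Y \<subseteq> A \<longrightarrow> sum f Y \<in> U"
    unfolding eventually_finite_subsets_at_top by blast
  let ?E = "insert a X"
  have E: "finite ?E" "?E \<subseteq> A" using X a by auto
  have "finite ?E \<and> X \<subseteq> ?E \<and> ?E \<subseteq> A" using E by auto
  then have "sum f ?E \<in> U" by (rule X(3)[rule_format])
  moreover have "sum f ?E = (\<Sum>a\<in>?E. zsmul (z a) a)"
    using E(2) z by (intro sum.cong) auto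
  ultimately have "(\<Sum>a\<in>?E. zsmul (z a) a) \<in> U" by simp
  then have "\<forall>b\<in>?E. zsmul (z b) b \<in> W" using TIU[rule_format, of ?E z] E by simp
  then have "zsmul (z a) a \<in> W" by simp
  then show ?thesis using z a by simp
qed

lemma C_fin:
  fixes A :: "'a::{topological_ab_group_add,t2_space} set"
  assumes AS: "absolutely_summable A" and W: "open W" "0 \<in> W"
  shows "\<exists>F0. finite F0 \<and> F0 \<subseteq> A \<and>
           (\<forall>E (z :: 'a \<Rightarrow> int). finite E \<and> E \<subseteq> A - F0 \<longrightarrow> (\<Sum>a\<in>E. zsmul (z a) a) \<in> W)"
proof (rule ccontr)
  assume nc: "\<not> ?thesis"
  have "\<forall>F0. \<exists>p :: 'a set \<times> ('a \<Rightarrow> int). finite F0 \<and> F0 \<subseteq> A \<longrightarrow>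
       finite (fst p) \<and> fst p \<subseteq> A - F0 \<and> (\<Sum>a\<in>fst p. zsmul (snd p a) a) \<notin> W"
  proof
    fix F0 :: "'a set"
    show "\<exists>p :: 'a set \<times> ('a \<Rightarrow> int). finite F0 \<and> F0 \<subseteq> A \<longrightarrow>
       finite (fst p) \<and> fst p \<subseteq> A - F0 \<and> (\<Sum>a\<in>fst p. zsmul (snd p a) a) \<notin> W"
    proof (cases "finite F0 \<and> F0 \<subseteq> A")
      case True
      have "\<not> (\<forall>E (z :: 'a \<Rightarrow> int). finite E \<and> E \<subseteq> A - F0 \<longrightarrow> (\<Sum>a\<in>E. zsmul (z a) a) \<in> W)"
        using nc True by auto
      then obtain E z where "finite E" "E \<subseteq> A - F0" "(\<Sum>a\<in>E. zsmul (z a) a) \<notin> W"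
        by auto
      then show ?thesis by (intro exI[of _ "(E, z)"]) simp
    next
      case False
      show ?thesis by (rule exI[of _ "({}, \<lambda>_. 0)"]) (use False in blast)
    qed
  qed
  then have "\<exists>ch. \<forall>F0. finite F0 \<and> F0 \<subseteq> A \<longrightarrow>
       finite (fst (ch F0)) \<and> fst (ch F0) \<subseteq> A - F0 \<and> (\<Sum>a\<in>fst (ch F0). zsmul (snd (ch F0) a) a) \<notin> W"
    by (rule choice)
  then obtain ch :: "'a set \<Rightarrow> 'a set \<times> ('a \<Rightarrow> int)" where ch0:
    "\<forall>F0. finite F0 \<and> F0 \<subseteq> A \<longrightarrow>
       finite (fst (ch F0)) \<and> fst (ch F0) \<subseteq> A - F0 \<and> (\<Sum>a\<in>fst (ch F0). zsmul (snd (ch F0) a) a) \<notin> W"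
    by (elim exE)
  have ch: "\<And>F0. finite F0 \<and> F0 \<subseteq> A \<Longrightarrow>
       finite (fst (ch F0)) \<and> fst (ch F0) \<subseteq> A - F0 \<and> (\<Sum>a\<in>fst (ch F0). zsmul (snd (ch F0) a) a) \<notin> W"
    using ch0 by blast
  define Fs where "Fs = rec_nat {} (\<lambda>n S. S \<union> fst (ch S))"
  have Fs0: "Fs 0 = {}" and FsS: "\<And>n. Fs (Suc n) = Fs n \<union> fst (ch (Fs n))"
    unfolding Fs_def by simp_all
  define En where "En n = fst (ch (Fs n))" for n
  define zn where "zn n = snd (ch (Fs n))" for n
  have Fs_ok: "finite (Fs n) \<and> Fs n \<subseteq> A" for n
  proof (induction n)
    case 0 then show ?case by (simp add: Fs0)
  next
    case (Suc n)
    then show ?case using ch[OF Suc] by (auto simp add: FsS)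
  qed
  have En: "finite (En n)" "En n \<subseteq> A - Fs n" "(\<Sum>a\<in>En n. zsmul (zn n a) a) \<notin> W" for n
    using ch[OF Fs_ok[of n]] unfolding En_def zn_def by auto
  have FsS': "Fs (Suc n) = Fs n \<union> En n" for n using FsS En_def by simp
  have mono: "Fs m \<subseteq> Fs (m + k)" for m k
    by (induction k) (auto simp: FsS')
  have sub: "En n \<subseteq> Fs m" if "n < m" for n m
  proof -
    have "En n \<subseteq> Fs (Suc n)" by (simp add: FsS')
    also have "\<dots> \<subseteq> Fs (Suc n + (m - Suc n))" by (rule mono)
    also have "Suc n + (m - Suc n) = m" using that by simp
    finally show ?thesis .
  qed
  have uniq: "n = m" if "a \<in> En n" "a \<in> En m" for a n m
  proof (rule ccontr)
    assume "n \<noteq> m"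
    then consider "n < m" | "m < n" by linarith
    then show False
    proof cases
      case 1
      then have "a \<in> Fs m" using sub that(1) by blast
      then show False using En(2)[of m] that(2) by blast
    next
      case 2
      then have "a \<in> Fs n" using sub that(2) by blast
      then show False using En(2)[of n] that(1) by blast
    qed
  qed
  define idx where "idx a = (LEAST n. a \<in> En n)" for a
  have idx: "idx a = n" if "a \<in> En n" for a n
    unfolding idx_def
  proof (rule Least_equality)
    show "a \<in> En n" by (rule that)
    show "\<And>y. a \<in> En y \<Longrightarrow> n \<le> y" using uniq[OF that] by simp
  qed
  define zt where "zt a = (if \<exists>n. a \<in> En n then zn (idx a) a else 0)" for a
  have zt: "zt a = zn n a" if "a \<in> En n" for a n
    using that idx unfolding zt_def by auto
  obtain V where V: "open V" "0 \<in> V" "\<forall>x\<in>V. \<forall>y\<in>V. x + y \<in> W \<and> x - y \<in> W"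
    using open_add_half[OF W] by blast
  have "(\<lambda>a. zsmul (zt a) a) summable_on A" using AS AS_iff by blast
  then obtain g where "((\<lambda>a. zsmul (zt a) a) has_sum g) A" unfolding summable_on_def by blast
  then have "\<forall>U. open U \<and> 0 \<in> U \<longrightarrow> (\<exists>F. finite F \<and> F \<subseteq> A \<and>
     (\<forall>E. finite E \<and> F \<subseteq> E \<and> E \<subseteq> A \<longrightarrow> g - (\<Sum>a\<in>E. zsmul (zt a) a) \<in> U))"
    by (simp only: conv_iff)
  then have "\<exists>F. finite F \<and> F \<subseteq> A \<and>
     (\<forall>E. finite E \<and> F \<subseteq> E \<and> E \<subseteq> A \<longrightarrow> g - (\<Sum>a\<in>E. zsmul (zt a) a) \<in> V)"
    using V(1,2) by simp
  then obtain F where F: "finite F" "F \<subseteq> A"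
     "\<forall>E. finite E \<and> F \<subseteq> E \<and> E \<subseteq> A \<longrightarrow> g - (\<Sum>a\<in>E. zsmul (zt a) a) \<in> V"
    by blast
  have "finite (idx ` F)" using F(1) by simp
  then obtain N where N: "N \<notin> idx ` F" using ex_new_if_finite infinite_UNIV_nat by blast
  have disj: "En N \<inter> F = {}"
  proof (rule ccontr)
    assume "En N \<inter> F \<noteq> {}"
    then obtain a where "a \<in> En N" "a \<in> F" by blast
    then have "N \<in> idx ` F" using idx[of a N] by (metis image_eqI)
    then show False using N by simp
  qed
  have EN: "finite (En N)" "En N \<subseteq> A" using En[of N] by auto
  have d1: "g - (\<Sum>a\<in>F. zsmul (zt a) a) \<in> V" using F(3)[rule_format, of F] F(1,2) by simp
  have d2: "g - (\<Sum>a\<in>F \<union> En N. zsmul (zt a) a) \<in> V"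
    using F(3)[rule_format, of "F \<union> En N"] F(1,2) EN by simp
  have "(\<Sum>a\<in>F \<union> En N. zsmul (zt a) a) = (\<Sum>a\<in>F. zsmul (zt a) a) + (\<Sum>a\<in>En N. zsmul (zt a) a)"
    using F(1) EN(1) disj by (simp add: sum.union_disjoint Int_commute)
  moreover have "(\<Sum>a\<in>En N. zsmul (zt a) a) = (\<Sum>a\<in>En N. zsmul (zn N a) a)"
    using zt by (intro sum.cong) auto
  ultimately have "(g - (\<Sum>a\<in>F. zsmul (zt a) a)) - (g - (\<Sum>a\<in>F \<union> En N. zsmul (zt a) a))
      = (\<Sum>a\<in>En N. zsmul (zn N a) a)" by (simp add: algebra_simps)
  moreover have "(g - (\<Sum>a\<in>F. zsmul (zt a) a)) - (g - (\<Sum>a\<in>F \<union> En N. zsmul (zt a) a)) \<in> W"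
    using V(3)[rule_format, OF d1 d2] by (rule conjunct2)
  ultimately show False using En(3)[of N] by simp
qed



lemma C_inf:
  fixes A :: "'a::{topological_ab_group_add,t2_space} set"
  assumes AS: "absolutely_summable A" and W: "open W" "0 \<in> W"
  shows "\<exists>F0. finite F0 \<and> F0 \<subseteq> A \<and>
           (\<forall>f \<in> (\<Pi>\<^sub>E a\<in>A. cyc a). (\<forall>a\<in>F0. f a = 0) \<longrightarrow> infsum f A \<in> W)"
proof -
  obtain V where V: "open V" "0 \<in> V" "\<forall>x\<in>V. \<forall>y\<in>V. x + y \<in> W \<and> x - y \<in> W"
    using open_add_half[OF W] by blast
  obtain F0 where F0: "finite F0" "F0 \<subseteq> A"
    "\<forall>E (z :: 'a \<Rightarrow> int). finite E \<and> E \<subseteq> A - F0 \<longrightarrow> (\<Sum>a\<in>E. zsmul (z a) a) \<in> V"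
    using C_fin[OF AS V(1,2)] by blast
  have "infsum f A \<in> W" if f: "f \<in> (\<Pi>\<^sub>E a\<in>A. cyc a)" and f0: "\<forall>a\<in>F0. f a = 0" for f
  proof -
    obtain z where z: "\<forall>a\<in>A. f a = zsmul (z a) a" using P_rep[OF f] by blast
    have "(f has_sum infsum f A) A" by (rule L_sum[OF AS f])
    then have "\<forall>U. open U \<and> 0 \<in> U \<longrightarrow> (\<exists>F. finite F \<and> F \<subseteq> A \<and>
     (\<forall>E. finite E \<and> F \<subseteq> E \<and> E \<subseteq> A \<longrightarrow> infsum f A - sum f E \<in> U))"
      by (simp only: conv_iff)
    then have "\<exists>F. finite F \<and> F \<subseteq> A \<and>
     (\<forall>E. finite E \<and> F \<subseteq> E \<and> E \<subseteq> A \<longrightarrow> infsum f A - sum f E \<in> V)"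
      using V(1,2) by simp
    then obtain F where F: "finite F" "F \<subseteq> A"
       "\<forall>E. finite E \<and> F \<subseteq> E \<and> E \<subseteq> A \<longrightarrow> infsum f A - sum f E \<in> V"
      by blast
    have d1: "infsum f A - sum f F \<in> V" using F(3)[rule_format, of F] F(1,2) by simp
    have "sum f F = sum f (F - F0)"
      using F(1) f0 by (intro sum.mono_neutral_right) auto
    also have "\<dots> = (\<Sum>a\<in>F - F0. zsmul (z a) a)"
      using F(2) z by (intro sum.cong) auto
    finally have "sum f F = (\<Sum>a\<in>F - F0. zsmul (z a) a)" .
    moreover have "(\<Sum>a\<in>F - F0. zsmul (z a) a) \<in> V"
      using F0(3)[rule_format, of "F - F0" z] F(1,2) by auto
    ultimately have d2: "sum f F \<in> V" by simp
    have "(infsum f A - sum f F) + sum f F \<in> W"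
      using V(3)[rule_format, OF d1 d2] by (rule conjunct1)
    then show ?thesis by simp
  qed
  then show ?thesis using F0(1,2) by blast
qed

lemma P_diff:
  assumes "f \<in> (\<Pi>\<^sub>E a\<in>A. cyc a)" "g \<in> (\<Pi>\<^sub>E a\<in>A. cyc a)"
  shows "(\<lambda>a\<in>A. f a - g a) \<in> (\<Pi>\<^sub>E a\<in>A. cyc a)"
  using assms by (auto simp: PiE_iff intro: cyc_diff)

lemma phi_cont:
  fixes A :: "'a::{topological_ab_group_add,t2_space} set"
  assumes AS: "absolutely_summable A"
  shows "continuous_map (PA_top A) euclidean (\<lambda>f. infsum f A)"
  unfolding continuous_map_def
proof (intro conjI allI impI)
  show "(\<lambda>f. infsum f A) \<in> topspace (PA_top A) \<rightarrow> topspace euclidean" by simp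
  fix W' :: "'a set"
  assume "openin euclidean W'"
  then have W': "open W'" by simp
  show "openin (PA_top A) {x \<in> topspace (PA_top A). infsum x A \<in> W'}"
  proof (subst openin_subopen, intro ballI)
    fix f assume "f \<in> {x \<in> topspace (PA_top A). infsum x A \<in> W'}"
    then have f: "f \<in> (\<Pi>\<^sub>E a\<in>A. cyc a)" and fW: "infsum f A \<in> W'" by (auto simp: topP)
    define W0 where "W0 = {x. infsum f A + x \<in> W'}"
    have W0: "open W0" "0 \<in> W0" using open_translate(1)[OF W'] fW unfolding W0_def by auto
    obtain V where V: "open V" "0 \<in> V" "\<forall>x\<in>V. \<forall>y\<in>V. x + y \<in> W0 \<and> x - y \<in> W0"
      using open_add_half[OF W0] by blast
    obtain F0 where F0: "finite F0" "F0 \<subseteq> A"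
      "\<forall>h \<in> (\<Pi>\<^sub>E a\<in>A. cyc a). (\<forall>a\<in>F0. h a = 0) \<longrightarrow> infsum h A \<in> V"
      using C_inf[OF AS V(1,2)] by blast
    obtain V' where V': "open V'" "0 \<in> V'" "\<forall>x. (\<forall>a\<in>F0. x a \<in> V') \<longrightarrow> sum x F0 \<in> V"
      using open_sum_small[OF F0(1) V(1,2)] by blast
    define T where "T = {g \<in> topspace (PA_top A). \<forall>a\<in>F0. g a \<in> {x. x - f a \<in> V'}}"
    have "openin (PA_top A) T" unfolding T_def
    proof (rule OP[OF F0(1)], intro ballI)
      fix a assume "a \<in> F0"
      then have "a \<in> A" using F0(2) by blast
      then show "openin (PA_top A) {x \<in> topspace (PA_top A). x a \<in> {x. x - f a \<in> V'}}"
        using proj_open open_translate(2)[OF V'(1)] by blast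
    qed
    moreover have "f \<in> T" unfolding T_def using f V'(2) by (simp add: topP)
    moreover have "T \<subseteq> {x \<in> topspace (PA_top A). infsum x A \<in> W'}"
    proof
      fix g assume gT: "g \<in> T"
      then have g: "g \<in> (\<Pi>\<^sub>E a\<in>A. cyc a)" and gV: "\<forall>a\<in>F0. g a - f a \<in> V'"
        unfolding T_def by (auto simp: topP)
      define h where "h = (\<lambda>a\<in>A. g a - f a)"
      have h: "h \<in> (\<Pi>\<^sub>E a\<in>A. cyc a)" unfolding h_def by (rule P_diff[OF g f])
      define h1 where "h1 = (\<lambda>a\<in>A. if a \<in> F0 then h a else 0)"
      define h2 where "h2 = (\<lambda>a\<in>A. if a \<in> F0 then 0 else h a)"
      have h1: "h1 \<in> (\<Pi>\<^sub>E a\<in>A. cyc a)" using h unfolding h1_def by (auto simp: PiE_iff)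
      have h2: "h2 \<in> (\<Pi>\<^sub>E a\<in>A. cyc a)" using h unfolding h2_def by (auto simp: PiE_iff)
      have hh: "h = (\<lambda>a\<in>A. h1 a + h2 a)" unfolding h1_def h2_def h_def by auto
      have "infsum g A - infsum f A = infsum h A" unfolding h_def using L_diff[OF AS g f] by simp
      also have "\<dots> = infsum h1 A + infsum h2 A" using L_add[OF AS h1 h2] hh by simp
      finally have eq: "infsum g A - infsum f A = infsum h1 A + infsum h2 A" .
      have "infsum h1 A = sum h F0" unfolding h1_def by (rule L_fin[OF F0(1,2)])
      moreover have "\<forall>a\<in>F0. h a \<in> V'" using gV F0(2) unfolding h_def by auto
      then have "sum h F0 \<in> V" using V'(3) by blast
      ultimately have i1: "infsum h1 A \<in> V" by simp
      have "\<forall>a\<in>F0. h2 a = 0" using F0(2) unfolding h2_def by auto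
      then have i2: "infsum h2 A \<in> V" using F0(3) h2 by blast
      have "infsum h1 A + infsum h2 A \<in> W0" using V(3)[rule_format, OF i1 i2] by (rule conjunct1)
      then have "infsum f A + (infsum g A - infsum f A) \<in> W'" unfolding W0_def eq by simp
      then show "g \<in> {x \<in> topspace (PA_top A). infsum x A \<in> W'}" using g by (simp add: topP)
    qed
    ultimately show "\<exists>T. openin (PA_top A) T \<and> f \<in> T \<and> T \<subseteq> {x \<in> topspace (PA_top A). infsum x A \<in> W'}"
      by blast
  qed
qed



lemma phi_inj:
  fixes A :: "'a::{topological_ab_group_add,t2_space} set"
  assumes AS: "absolutely_summable A" and TI: "top_independent A"
  shows "inj_on (\<lambda>f. infsum f A) (\<Pi>\<^sub>E a\<in>A. cyc a)"
proof (rule inj_onI)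
  fix f g assume f: "f \<in> (\<Pi>\<^sub>E a\<in>A. cyc a)" and g: "g \<in> (\<Pi>\<^sub>E a\<in>A. cyc a)"
    and eq: "infsum f A = infsum g A"
  define h where "h = (\<lambda>a\<in>A. f a - g a)"
  have h: "h \<in> (\<Pi>\<^sub>E a\<in>A. cyc a)" unfolding h_def by (rule P_diff[OF f g])
  have h0: "infsum h A = 0" unfolding h_def using L_diff[OF AS f g] eq by simp
  have "h a = 0" if a: "a \<in> A" for a
  proof (rule ccontr)
    assume "h a \<noteq> 0"
    then obtain W where W: "open W" "0 \<in> W" "h a \<notin> W" using t1_space[of 0 "h a"] by metis
    obtain U where U: "open U" "0 \<in> U" "\<forall>F (z :: 'a \<Rightarrow> int). finite F \<and> F \<subseteq> A \<and> (\<Sum>a\<in>F. zsmul (z a) a) \<in> U \<longrightarrow>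
            (\<forall>a\<in>F. zsmul (z a) a \<in> W)"
      using TI W(1,2) unfolding top_independent_def by blast
    have "h a \<in> W" using L_IND[OF AS h U(1) U(3)] h0 U(2) a by simp
    then show False using W(3) by simp
  qed
  then have "\<forall>a\<in>A. f a = g a" unfolding h_def by simp
  then show "f = g" using f g by (auto simp: PiE_iff extensional_def fun_eq_iff)
qed

lemma phi_open:
  fixes A :: "'a::{topological_ab_group_add,t2_space} set"
  assumes AS: "absolutely_summable A" and TI: "top_independent A"
  shows "open_map (PA_top A) (subtopology euclidean ((\<lambda>f. infsum f A) ` topspace (PA_top A))) (\<lambda>f. infsum f A)"
  unfolding open_map_def
proof (intro allI impI)
  fix Ob assume Ob: "openin (PA_top A) Ob"
  let ?S = "(\<lambda>f. infsum f A) ` topspace (PA_top A)"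
  show "openin (subtopology euclidean ?S) ((\<lambda>f. infsum f A) ` Ob)"
  proof (subst openin_subopen, intro ballI)
    fix y assume "y \<in> (\<lambda>f. infsum f A) ` Ob"
    then obtain f where fO: "f \<in> Ob" and y: "y = infsum f A" by blast
    have Osub: "Ob \<subseteq> (\<Pi>\<^sub>E a\<in>A. cyc a)" using openin_subset[OF Ob] by (simp add: topP)
    have f: "f \<in> (\<Pi>\<^sub>E a\<in>A. cyc a)" using fO Osub by blast
    obtain Ub where Ub: "finite {i \<in> A. Ub i \<noteq> topspace (subtopology euclidean (cyc i))}"
      "\<forall>i\<in>A. openin (subtopology euclidean (cyc i)) (Ub i)" "f \<in> Pi\<^sub>E A Ub" "Pi\<^sub>E A Ub \<subseteq> Ob"
      using Ob fO unfolding PA_top_def openin_product_topology_alt by blast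
    define F1 where "F1 = {i \<in> A. Ub i \<noteq> cyc i}"
    have F1: "finite F1" using Ub(1) unfolding F1_def by simp
    have "\<forall>i\<in>A. \<exists>T. open T \<and> Ub i = T \<inter> cyc i"
      using Ub(2) by (auto simp: openin_subtopology)
    then obtain T where T: "\<forall>i\<in>A. open (T i) \<and> Ub i = T i \<inter> cyc i"
      by (metis (no_types))
    define W where "W = (\<Inter>i\<in>F1. {x. f i + x \<in> T i})"
    have W: "open W" unfolding W_def
      using F1 T open_translate(1) unfolding F1_def by (intro open_INT) auto
    have W0: "0 \<in> W" unfolding W_def using Ub(3) T unfolding F1_def by (auto simp: PiE_iff)
    obtain U where U: "open U" "0 \<in> U" "\<forall>F (z :: 'a \<Rightarrow> int). finite F \<and> F \<subseteq> A \<and> (\<Sum>a\<in>F. zsmul (z a) a) \<in> U \<longrightarrow>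
            (\<forall>a\<in>F. zsmul (z a) a \<in> W)"
      using TI W W0 unfolding top_independent_def by blast
    define Uf where "Uf = {x. x - infsum f A \<in> U}"
    have Uf: "open Uf" unfolding Uf_def by (rule open_translate(2)[OF U(1)])
    have yU: "y \<in> Uf" unfolding Uf_def y using U(2) by simp
    have sub: "Uf \<inter> ?S \<subseteq> (\<lambda>f. infsum f A) ` Ob"
    proof
      fix x assume "x \<in> Uf \<inter> ?S"
      then obtain g where g: "g \<in> (\<Pi>\<^sub>E a\<in>A. cyc a)" and x: "x = infsum g A"
        and xU: "infsum g A - infsum f A \<in> U" unfolding Uf_def by (auto simp: topP)
      define h where "h = (\<lambda>a\<in>A. g a - f a)"
      have h: "h \<in> (\<Pi>\<^sub>E a\<in>A. cyc a)" unfolding h_def by (rule P_diff[OF g f])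
      have "infsum h A = infsum g A - infsum f A" unfolding h_def by (rule L_diff[OF AS g f])
      then have hU: "infsum h A \<in> U" using xU by simp
      have hW: "h a \<in> W" if "a \<in> A" for a by (rule L_IND[OF AS h U(1) U(3) hU that])
      have "g \<in> Pi\<^sub>E A Ub"
      proof (subst PiE_iff, intro conjI ballI)
        show "g \<in> extensional A" using g by (simp add: PiE_iff)
        fix i assume i: "i \<in> A"
        show "g i \<in> Ub i"
        proof (cases "i \<in> F1")
          case True
          have "h i \<in> {x. f i + x \<in> T i}" using hW[OF i] True unfolding W_def by blast
          then have "g i \<in> T i" using i unfolding h_def by simp
          moreover have "g i \<in> cyc i" using g i by (simp add: PiE_iff)
          ultimately show ?thesis using T i by blast
        next
          case False
          then have "Ub i = cyc i" using i unfolding F1_def by simp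
          then show ?thesis using g i by (simp add: PiE_iff)
        qed
      qed
      then have "g \<in> Ob" using Ub(4) by blast
      then show "x \<in> (\<lambda>f. infsum f A) ` Ob" using x by blast
    qed
    have "openin (subtopology euclidean ?S) (Uf \<inter> ?S)"
      using Uf by (auto simp: openin_subtopology)
    then show "\<exists>T. openin (subtopology euclidean ?S) T \<and> y \<in> T \<and> T \<subseteq> (\<lambda>f. infsum f A) ` Ob"
      using yU sub fO Osub y by (intro exI[of _ "Uf \<inter> ?S"]) (auto simp: topP)
  qed
qed

lemma dir2:
  fixes A :: "'a::{topological_ab_group_add,t2_space} set"
  assumes AS: "absolutely_summable A" and TI: "top_independent A"
  shows "continuous_map (SA_top A) euclidean (kalton A) \<and>
          (\<exists>\<phi>. continuous_map (PA_top A) euclidean \<phi> \<and>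
               (\<forall>f\<in>SA A. \<phi> f = kalton A f) \<and>
               (\<forall>f\<in>topspace (PA_top A). \<forall>g\<in>topspace (PA_top A).
                   \<phi> (\<lambda>a\<in>A. f a + g a) = \<phi> f + \<phi> g) \<and>
               embedding_map (PA_top A) euclidean \<phi>)"
proof -
  let ?phi = "\<lambda>f. infsum f A"
  have c: "continuous_map (PA_top A) euclidean ?phi" by (rule phi_cont[OF AS])
  have sa: "\<forall>f\<in>SA A. ?phi f = kalton A f" using L_SA by blast
  have ad: "\<forall>f\<in>topspace (PA_top A). \<forall>g\<in>topspace (PA_top A). ?phi (\<lambda>a\<in>A. f a + g a) = ?phi f + ?phi g"
    using L_add[OF AS] by (simp add: topP)
  have "homeomorphic_map (PA_top A) (subtopology euclidean (?phi ` topspace (PA_top A))) ?phi"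
  proof (rule bijective_open_imp_homeomorphic_map)
    show "continuous_map (PA_top A) (subtopology euclidean (?phi ` topspace (PA_top A))) ?phi"
      using c by (rule continuous_map_into_subtopology) blast
    show "open_map (PA_top A) (subtopology euclidean (?phi ` topspace (PA_top A))) ?phi"
      by (rule phi_open[OF AS TI])
    show "?phi ` topspace (PA_top A) = topspace (subtopology euclidean (?phi ` topspace (PA_top A)))"
      by simp
    show "inj_on ?phi (topspace (PA_top A))" using phi_inj[OF AS TI] by (simp add: topP)
  qed
  then have e: "embedding_map (PA_top A) euclidean ?phi" unfolding embedding_map_def .
  have k: "continuous_map (SA_top A) euclidean (kalton A)"
  proof (rule continuous_map_eq)
    show "continuous_map (SA_top A) euclidean ?phi"
      unfolding SA_top_def using c by (rule continuous_map_from_subtopology)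
    fix x assume "x \<in> topspace (SA_top A)"
    then have "x \<in> SA A" unfolding SA_top_def by simp
    then show "?phi x = kalton A x" using sa by blast
  qed
  show ?thesis using k c sa ad e by blast
qed



lemma dir1:
  fixes A :: "'a::{topological_ab_group_add,t2_space} set"
  assumes A0: "0 \<notin> A"
    and c: "continuous_map (PA_top A) euclidean \<phi>"
    and sa: "\<forall>f\<in>SA A. \<phi> f = kalton A f"
    and e: "embedding_map (PA_top A) euclidean \<phi>"
  shows "absolutely_summable A \<and> top_independent A"
proof
  have val: "\<phi> (\<lambda>a\<in>A. if a \<in> E then zsmul (z a) a else 0) = (\<Sum>a\<in>E. zsmul (z a) a)"
    if "finite E" "E \<subseteq> A" for E z
    using sa KAL_SA[OF that] KAL_val[OF that] by simp
  show "absolutely_summable A"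
    unfolding AS_iff summable_on_def
  proof
    fix z :: "'a \<Rightarrow> int"
    define f where "f = (\<lambda>a\<in>A. zsmul (z a) a)"
    define fE where "fE E = (\<lambda>a\<in>A. if a \<in> E then zsmul (z a) a else 0)" for E
    have lim: "limitin (PA_top A) fE f (finite_subsets_at_top A)"
      unfolding PA_top_def limitin_componentwise
    proof (intro conjI ballI)
      show "f \<in> extensional A" unfolding f_def by simp
      show "\<forall>\<^sub>F E in finite_subsets_at_top A. fE E \<in> topspace (product_topology (\<lambda>a. subtopology euclidean (cyc a)) A)"
        by (intro always_eventually allI) (auto simp: fE_def PiE_iff)
      fix i assume i: "i \<in> A"
      show "limitin (subtopology euclidean (cyc i)) (\<lambda>E. fE E i) (f i) (finite_subsets_at_top A)"
      proof (rule limitin_eventually)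
        show "f i \<in> topspace (subtopology euclidean (cyc i))" using i unfolding f_def by simp
        show "\<forall>\<^sub>F E in finite_subsets_at_top A. fE E i = f i"
          unfolding eventually_finite_subsets_at_top
          using i unfolding fE_def f_def by (intro exI[of _ "{i}"]) auto
      qed
    qed
    have "limitin euclidean (\<phi> \<circ> fE) (\<phi> f) (finite_subsets_at_top A)"
      by (rule continuous_map_limit[OF c lim])
    then have t: "((\<lambda>E. \<phi> (fE E)) \<longlongrightarrow> \<phi> f) (finite_subsets_at_top A)" by (simp add: o_def)
    have ev: "\<forall>\<^sub>F E in finite_subsets_at_top A. \<phi> (fE E) = (\<Sum>a\<in>E. zsmul (z a) a)"
      using val unfolding fE_def by (intro eventually_finite_subsets_at_top_weakI) simp
    have "((\<lambda>E. (\<Sum>a\<in>E. zsmul (z a) a)) \<longlongrightarrow> \<phi> f) (finite_subsets_at_top A)"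
      using t ev by (rule Lim_transform_eventually)
    then show "\<exists>s. ((\<lambda>a. zsmul (z a) a) has_sum s) A" unfolding has_sum_def by blast
  qed
  show "top_independent A"
    unfolding top_independent_def
  proof (intro conjI allI impI)
    show "0 \<notin> A" by (rule A0)
    fix W :: "'a set" assume W: "open W \<and> 0 \<in> W"
    define o0 where "o0 = (\<lambda>a\<in>A. (0::'a))"
    have o0v: "\<phi> o0 = 0" using val[of "{}" "\<lambda>_. 0"] unfolding o0_def by simp
    have o0P: "o0 \<in> (\<Pi>\<^sub>E a\<in>A. cyc a)" unfolding o0_def by simp
    have "openin euclidean W" using W by simp
    then have op: "openin (PA_top A) {x \<in> topspace (PA_top A). \<phi> x \<in> W}"
      by (rule openin_continuous_map_preimage[OF c])
    have mem: "o0 \<in> {x \<in> topspace (PA_top A). \<phi> x \<in> W}" using o0v o0P W by (simp add: topP)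
    have "\<exists>U. finite {i \<in> A. U i \<noteq> topspace (subtopology euclidean (cyc i))} \<and>
                 (\<forall>i \<in> A. openin (subtopology euclidean (cyc i)) (U i)) \<and> o0 \<in> Pi\<^sub>E A U \<and>
                 Pi\<^sub>E A U \<subseteq> {x \<in> topspace (PA_top A). \<phi> x \<in> W}"
      using op mem unfolding PA_top_def openin_product_topology_alt by blast
    then obtain Ub where Ub: "finite {i \<in> A. Ub i \<noteq> topspace (subtopology euclidean (cyc i))}"
      "\<forall>i\<in>A. openin (subtopology euclidean (cyc i)) (Ub i)" "o0 \<in> Pi\<^sub>E A Ub"
      "Pi\<^sub>E A Ub \<subseteq> {x \<in> topspace (PA_top A). \<phi> x \<in> W}"
      by blast
    define F1 where "F1 = {i \<in> A. Ub i \<noteq> cyc i}"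
    have F1: "finite F1" "F1 \<subseteq> A" using Ub(1) unfolding F1_def by auto
    have claim1: "zsmul k b \<in> W" if b: "b \<in> A" "b \<notin> F1" for b k
    proof -
      let ?e = "\<lambda>a\<in>A. if a \<in> {b} then zsmul ((\<lambda>_. k) a) a else 0"
      have "?e \<in> Pi\<^sub>E A Ub"
      proof (subst PiE_iff, intro conjI ballI)
        show "?e \<in> extensional A" by simp
        fix i assume i: "i \<in> A"
        show "?e i \<in> Ub i"
        proof (cases "i = b")
          case True
          then have "Ub i = cyc i" using b unfolding F1_def by simp
          then show ?thesis using True i by simp
        next
          case False
          have "o0 i \<in> Ub i" using Ub(3) i by (simp add: PiE_iff)
          then show ?thesis using False i unfolding o0_def by simp
        qed
      qed
      then have "\<phi> ?e \<in> W" using Ub(4) by blast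
      moreover have "\<phi> ?e = (\<Sum>a\<in>{b}. zsmul ((\<lambda>_. k) a) a)" by (rule val) (use b in auto)
      ultimately show ?thesis by simp
    qed
    define B where "B = {g \<in> topspace (PA_top A). \<forall>a\<in>F1. g a \<in> W}"
    have "openin (PA_top A) B" unfolding B_def
    proof (rule OP[OF F1(1)], intro ballI)
      fix a assume "a \<in> F1"
      then have "a \<in> A" using F1(2) by blast
      then show "openin (PA_top A) {x \<in> topspace (PA_top A). x a \<in> W}"
        using proj_open W by blast
    qed
    have hm: "homeomorphic_map (PA_top A) (subtopology euclidean (\<phi> ` topspace (PA_top A))) \<phi>"
      using e unfolding embedding_map_def .
    have inj: "inj_on \<phi> (topspace (PA_top A))" by (rule homeomorphic_imp_injective_map[OF hm])
    have om: "\<forall>U. openin (PA_top A) U \<longrightarrow> openin (subtopology euclidean (\<phi> ` topspace (PA_top A))) (\<phi> ` U)"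
      using homeomorphic_imp_open_map[OF hm] unfolding open_map_def .
    have "openin (subtopology euclidean (\<phi> ` topspace (PA_top A))) (\<phi> ` B)"
      using om[rule_format, OF \<open>openin (PA_top A) B\<close>] .
    then obtain U0 where U0: "open U0" "\<phi> ` B = U0 \<inter> \<phi> ` topspace (PA_top A)"
      by (auto simp: openin_subtopology)
    have "o0 \<in> B" unfolding B_def using o0P W F1(2) by (auto simp: topP o0_def)
    then have "\<phi> o0 \<in> \<phi> ` B" by (rule imageI)
    then have "\<phi> o0 \<in> U0" unfolding U0(2) by (rule IntD1)
    then have U00: "0 \<in> U0" using o0v by simp
    have "\<forall>F (z :: 'a \<Rightarrow> int). finite F \<and> F \<subseteq> A \<and> (\<Sum>a\<in>F. zsmul (z a) a) \<in> U0 \<longrightarrow>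
            (\<forall>a\<in>F. zsmul (z a) a \<in> W)"
    proof (intro allI impI ballI)
      fix F and z :: "'a \<Rightarrow> int" and a
      assume H: "finite F \<and> F \<subseteq> A \<and> (\<Sum>a\<in>F. zsmul (z a) a) \<in> U0" and a: "a \<in> F"
      define f where "f = (\<lambda>a\<in>A. if a \<in> F then zsmul (z a) a else 0)"
      have fP: "f \<in> topspace (PA_top A)" unfolding f_def by (simp add: topP PiE_iff)
      have "\<phi> f = (\<Sum>a\<in>F. zsmul (z a) a)" unfolding f_def using H by (intro val) auto
      then have "\<phi> f \<in> U0" using H by simp
      moreover have "\<phi> f \<in> \<phi> ` topspace (PA_top A)" by (rule imageI[OF fP])
      ultimately have "\<phi> f \<in> \<phi> ` B" by (simp add: U0(2))
      then obtain g where gB: "g \<in> B" and gf: "\<phi> g = \<phi> f" by auto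
      have gP: "g \<in> topspace (PA_top A)" using gB unfolding B_def by blast
      have "g = f" by (rule inj_onD[OF inj gf gP fP])
      then have fB: "f \<in> B" using gB by simp
      show "zsmul (z a) a \<in> W"
      proof (cases "a \<in> F1")
        case True
        then have "f a \<in> W" using fB unfolding B_def by blast
        then show ?thesis using a H unfolding f_def by auto
      next
        case False
        then show ?thesis using claim1 a H by blast
      qed
    qed
    then show "\<exists>U. open U \<and> 0 \<in> U \<and> (\<forall>F (z :: 'a \<Rightarrow> int). finite F \<and> F \<subseteq> A \<and> (\<Sum>a\<in>F. zsmul (z a) a) \<in> U \<longrightarrow>
            (\<forall>a\<in>F. zsmul (z a) a \<in> W))"
      using U0(1) U00 by blast
  qed
qed

theorem theorem7p2:
  fixes A :: "'a::{topological_ab_group_add,t2_space} set"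
  assumes "0 \<notin> A"
  shows "(continuous_map (SA_top A) euclidean (kalton A) \<and>
          (\<exists>\<phi>. continuous_map (PA_top A) euclidean \<phi> \<and>
               (\<forall>f\<in>SA A. \<phi> f = kalton A f) \<and>
               (\<forall>f\<in>topspace (PA_top A). \<forall>g\<in>topspace (PA_top A).
                   \<phi> (\<lambda>a\<in>A. f a + g a) = \<phi> f + \<phi> g) \<and>
               embedding_map (PA_top A) euclidean \<phi>))
     \<longleftrightarrow> absolutely_summable A \<and> top_independent A"
proof
  assume "continuous_map (SA_top A) euclidean (kalton A) \<and>
          (\<exists>\<phi>. continuous_map (PA_top A) euclidean \<phi> \<and>
               (\<forall>f\<in>SA A. \<phi> f = kalton A f) \<and>
               (\<forall>f\<in>topspace (PA_top A). \<forall>g\<in>topspace (PA_top A).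
                   \<phi> (\<lambda>a\<in>A. f a + g a) = \<phi> f + \<phi> g) \<and>
               embedding_map (PA_top A) euclidean \<phi>)"
  then obtain \<phi> where "continuous_map (PA_top A) euclidean \<phi>" "\<forall>f\<in>SA A. \<phi> f = kalton A f"
    "embedding_map (PA_top A) euclidean \<phi>" by blast
  then show "absolutely_summable A \<and> top_independent A" using dir1[OF assms] by blast
next
  assume h2: "absolutely_summable A \<and> top_independent A"
  have AS: "absolutely_summable A" using h2 by (rule conjunct1)
  have TI: "top_independent A" using h2 by (rule conjunct2)
  show "continuous_map (SA_top A) euclidean (kalton A) \<and>
          (\<exists>\<phi>. continuous_map (PA_top A) euclidean \<phi> \<and>
               (\<forall>f\<in>SA A. \<phi> f = kalton A f) \<and>
               (\<forall>f\<in>topspace (PA_top A). \<forall>g\<in>topspace (PA_top A).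
                   \<phi> (\<lambda>a\<in>A. f a + g a) = \<phi> f + \<phi> g) \<and>
               embedding_map (PA_top A) euclidean \<phi>)"
    by (rule dir2[OF AS TI])
qed

end
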